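(* Given positive integers $m_1,\dots,m_n$, there exist a critically fixed polynomial $P$ and distinct critical points $c_1,\dots,c_n$ of $P$ such that the multiplicity of $c_i$ is $m_i$ for each $i\in\{1,\dots,n\}$.
   Context: A rational map (in particular a polynomial, viewed as a self-map of $\widehat{\mathbb{C}}$) is critically fixed if each of its critical points is a fixed point. *)

theory Defs
  imports "HOL-Computational_Algebra.Polynomial"
begin

text \<open>A complex polynomial P of degree at least 2, viewed as a self-map of the
Riemann sphere. Its critical points are the finite zeros of its derivative
together with the point at infinity (which is always fixed by P).
A finite critical point c has multiplicity = (local degree of P at c) - 1,
which equals the order of c as a root of the derivative.\<close>

definition is_crit_point :: "complex poly \<Rightarrow> complex \<Rightarrow> bool" where
  "is_crit_point P c \<longleftrightarrow> poly (pderiv P) c = 0"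

definition crit_mult :: "complex poly \<Rightarrow> complex \<Rightarrow> nat" where
  "crit_mult P c = order c (pderiv P)"

text \<open>Critically fixed: every critical point is fixed. The critical point at
infinity of a polynomial is automatically fixed, so only finite critical
points need to be checked.\<close>
definition critically_fixed_poly :: "complex poly \<Rightarrow> bool" where
  "critically_fixed_poly P \<longleftrightarrow>
     degree P \<ge> 2 \<and> (\<forall>c. is_crit_point P c \<longrightarrow> poly P c = c)"

end

theory Submission
  imports Defs "HOL-Analysis.Analysis"
begin



lemma antideriv_exists:
  fixes Q :: "complex poly"
  shows "\<exists>P. pderiv P = Q \<and> poly P 0 = 0"
proof -
  define P where "P = (\<Sum>i\<le>degree Q. monom (coeff Q i / of_nat (Suc i)) (Suc i))"
  have "pderiv P = (\<Sum>i\<le>degree Q. pderiv (monom (coeff Q i / of_nat (Suc i)) (Suc i)))"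
    unfolding P_def using higher_pderiv_sum[of 1] by simp
  also have "\<dots> = (\<Sum>i\<le>degree Q. monom (coeff Q i) i)"
    by (intro sum.cong refl) (simp add: pderiv_monom del: of_nat_Suc)
  also have "\<dots> = Q" by (rule poly_as_sum_of_monoms)
  finally have "pderiv P = Q" .
  moreover have "poly P 0 = 0" unfolding P_def by (simp add: poly_sum poly_monom)
  ultimately show ?thesis by blast
qed

lemma poly_integral_rep:
  fixes P :: "complex poly"
  shows "poly P z - poly P 0 = z * integral {0..1} (\<lambda>s::real. poly (pderiv P) (z * of_real s))"
proof -
  have d: "((\<lambda>s::real. poly P (z * of_real s)) has_vector_derivative (poly (pderiv P) (z * of_real s) * z)) (at s within {0..1})" for s
  proof -
    have "((\<lambda>w. poly P (z * w)) has_field_derivative (poly (pderiv P) (z * of_real s) * z)) (at (of_real s))"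
      by (rule DERIV_chain2[where f="poly P" and g="\<lambda>w. z*w"]) (auto intro!: derivative_eq_intros)
    then show ?thesis by (rule has_vector_derivative_real_field)
  qed
  have "((\<lambda>s. poly (pderiv P) (z * of_real s) * z) has_integral (poly P (z * of_real 1) - poly P (z * of_real 0))) {0..(1::real)}"
    by (rule fundamental_theorem_of_calculus) (use d in auto)
  then have "integral {0..1} (\<lambda>s. poly (pderiv P) (z * of_real s) * z) = poly P (z * of_real 1) - poly P (z * of_real 0)"
    by (rule integral_unique)
  then show ?thesis by (simp add: mult.commute)
qed

definition Qp :: "nat \<Rightarrow> nat set \<Rightarrow> (nat \<Rightarrow> nat) \<Rightarrow> (nat \<Rightarrow> complex) \<Rightarrow> complex poly" where
  "Qp K I m c = monom 1 K * (\<Prod>i\<in>I. [:- c i, 1:] ^ m i)"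

lemma poly_Qp: "poly (Qp K I m c) w = w ^ K * (\<Prod>i\<in>I. (w - c i) ^ m i)"
  by (simp add: Qp_def poly_monom poly_prod)

lemma Qp_nonzero: "finite I \<Longrightarrow> Qp K I m c \<noteq> 0"
  by (simp add: Qp_def)

lemma Qp_roots:
  assumes "finite I" "poly (Qp K I m c) w = 0"
  shows "w = 0 \<or> (\<exists>i\<in>I. w = c i)"
  using assms by (auto simp: poly_Qp prod_zero_iff)

lemma Qp_order:
  assumes "finite I" "j \<in> I" "inj_on c I" "c j \<noteq> 0"
  shows "order (c j) (Qp K I m c) = m j"
proof -
  have split: "(\<Prod>i\<in>I. [:- c i, 1:] ^ m i) = [:- c j, 1:] ^ m j * (\<Prod>i\<in>I-{j}. [:- c i, 1:] ^ m i)"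
    using assms by (simp add: prod.remove)
  have Q: "Qp K I m c = [:- c j, 1:] ^ m j * (monom 1 K * (\<Prod>i\<in>I-{j}. [:- c i, 1:] ^ m i))"
    unfolding Qp_def split by (simp add: algebra_simps)
  have nz: "poly (monom 1 K * (\<Prod>i\<in>I-{j}. [:- c i, 1:] ^ m i)) (c j) \<noteq> 0"
    using assms by (auto simp: poly_monom poly_prod prod_zero_iff inj_on_def)
  have nz2: "monom 1 K * (\<Prod>i\<in>I-{j}. [:- c i, 1:] ^ m i) \<noteq> (0::complex poly)"
    using nz by auto
  have "order (c j) (Qp K I m c) = order (c j) ([:- c j, 1:] ^ m j) + order (c j) (monom 1 K * (\<Prod>i\<in>I-{j}. [:- c i, 1:] ^ m i))"
    unfolding Q by (rule order_mult) (use nz2 in simp)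
  also have "\<dots> = m j" using nz by (simp add: order_power_n_n order_0I)
  finally show ?thesis .
qed



definition wt :: "nat \<Rightarrow> nat \<Rightarrow> real \<Rightarrow> real" where
  "wt K r s = s ^ K * (1 - s) ^ r"

definition BB :: "nat \<Rightarrow> nat \<Rightarrow> real" where
  "BB K r = integral {0..1} (wt K r)"

lemma wt_cont: "continuous_on S (wt K r)"
  unfolding wt_def by (intro continuous_intros)

lemma wt_integrable: "wt K r integrable_on {0..1}"
  by (rule integrable_continuous_interval[OF wt_cont])

lemma BB_eq: "BB K r = fact K * fact r / fact (K + r + 1)"
proof -
  have "((\<lambda>t. t powr (real K + 1 - 1) * (1 - t) powr (real r + 1 - 1)) has_integral Beta (real K + 1) (real r + 1)) {0..1}"
    by (rule has_integral_Beta_real) auto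
  then have "((\<lambda>t. t powr (real K + 1 - 1) * (1 - t) powr (real r + 1 - 1)) has_integral Beta (real K + 1) (real r + 1)) {0<..<1}"
    by (simp add: has_integral_Icc_iff_Ioo)
  then have "(wt K r has_integral Beta (real K + 1) (real r + 1)) {0<..<1}"
    by (rule has_integral_cong[THEN iffD1, rotated]) (auto simp: wt_def powr_realpow)
  then have "(wt K r has_integral Beta (real K + 1) (real r + 1)) {0..1}"
    by (simp add: has_integral_Icc_iff_Ioo)
  then have "BB K r = Beta (real K + 1) (real r + 1)"
    unfolding BB_def by (rule integral_unique)
  also have "\<dots> = fact K * fact r / fact (K + r + 1)"
  proof -
    have "Gamma (real K + 1) = fact K" using Gamma_fact[of K] by (simp add: add.commute)
    moreover have "Gamma (real r + 1) = fact r" using Gamma_fact[of r] by (simp add: add.commute)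
    moreover have "Gamma (real K + 1 + (real r + 1)) = fact (K + r + 1)"
      using Gamma_fact[of "K + r + 1"] by (simp add: add.commute add.left_commute)
    ultimately show ?thesis by (simp add: Beta_def)
  qed
  finally show ?thesis .
qed

lemma BB_pos: "BB K r > 0"
  by (simp add: BB_eq)

lemma BB_Suc: "BB K (Suc r) = BB K r * (real r + 1) / (real K + real r + 2)"
  by (simp add: BB_eq field_simps)

lemma fact_add_le: "fact (K + r) \<le> (fact K :: real) * (real K + real r) ^ r"
proof (induction r)
  case 0 then show ?case by simp
next
  case (Suc r)
  have "fact (K + Suc r) = (real K + real r + 1) * (fact (K + r) :: real)"
    by (simp add: algebra_simps)
  also have "\<dots> \<le> (real K + real r + 1) * (fact K * (real K + real r) ^ r)"
    by (rule mult_left_mono[OF Suc.IH]) auto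
  also have "\<dots> \<le> (real K + real r + 1) * (fact K * (real K + real (Suc r)) ^ r)"
    by (intro mult_left_mono power_mono) auto
  also have "\<dots> = fact K * (real K + real (Suc r)) ^ Suc r" by (simp add: algebra_simps)
  finally show ?case .
qed

lemma BB_le1: "BB K r \<le> 1"
proof -
  have "fact K * fact r dvd (fact (K + r) :: nat)" by (rule fact_fact_dvd_fact)
  then have "fact K * fact r \<le> (fact (K + r) :: nat)" by (rule dvd_imp_le) auto
  also have "\<dots> \<le> fact (K + r + 1)" by (rule fact_mono) auto
  finally have "(fact K * fact r :: real) \<le> fact (K + r + 1)"
    by (metis of_nat_fact of_nat_le_iff of_nat_mult)
  then show ?thesis by (simp add: BB_eq)
qed

lemma BB_inv_le: "1 / BB K r \<le> (real K + real r + 1) ^ (r + 1)"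
proof -
  have "1 / BB K r = fact (K + (r + 1)) / (fact K * fact r)" by (simp add: BB_eq)
  also have "\<dots> \<le> fact (K + (r+1)) / fact K"
    by (rule divide_left_mono) (auto simp: fact_ge_1)
  also have "\<dots> \<le> (real K + real (r+1)) ^ (r+1)"
    using fact_add_le[of K "r+1"] by (simp add: field_simps)
  also have "\<dots> = (real K + real r + 1) ^ (r + 1)" by (simp add: algebra_simps)
  finally show ?thesis .
qed

lemma integral_ofreal_wt:
  "integral {0..1} (\<lambda>s. complex_of_real (wt K r s)) = complex_of_real (BB K r)"
  unfolding BB_def
  using integral_linear[OF wt_integrable bounded_linear_of_real, of K r]
  by (simp add: o_def)



lemma prod_pow_diff:
  fixes a b :: "nat \<Rightarrow> complex"
  assumes "finite A" "\<And>i. i \<in> A \<Longrightarrow> norm (a i) \<le> 3" "\<And>i. i \<in> A \<Longrightarrow> norm (b i) \<le> 3"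
  shows "norm ((\<Prod>i\<in>A. a i ^ m i) - (\<Prod>i\<in>A. b i ^ m i))
           \<le> 3 ^ (\<Sum>i\<in>A. m i) * (\<Sum>i\<in>A. real (m i) * norm (a i - b i))"
proof -
  have ea: "(\<Prod>i\<in>A. a i ^ m i) = 3 ^ (\<Sum>i\<in>A. m i) * (\<Prod>i\<in>A. (a i / 3) ^ m i)" for a :: "nat \<Rightarrow> complex"
  proof -
    have "(\<Prod>i\<in>A. a i ^ m i) = (\<Prod>i\<in>A. 3 ^ m i * (a i / 3) ^ m i)"
      by (intro prod.cong refl) (simp add: power_divide)
    also have "\<dots> = (\<Prod>i\<in>A. 3 ^ m i) * (\<Prod>i\<in>A. (a i / 3) ^ m i)"
      by (rule prod.distrib)
    also have "(\<Prod>i\<in>A. (3::complex) ^ m i) = 3 ^ (\<Sum>i\<in>A. m i)"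
      by (simp add: power_sum)
    finally show ?thesis .
  qed
  have "norm ((\<Prod>i\<in>A. a i ^ m i) - (\<Prod>i\<in>A. b i ^ m i))
        = 3 ^ (\<Sum>i\<in>A. m i) * norm ((\<Prod>i\<in>A. (a i / 3) ^ m i) - (\<Prod>i\<in>A. (b i / 3) ^ m i))"
    unfolding ea[of a] ea[of b] right_diff_distrib[symmetric] norm_mult norm_power by simp
  also have "\<dots> \<le> 3 ^ (\<Sum>i\<in>A. m i) * (\<Sum>i\<in>A. norm ((a i / 3) ^ m i - (b i / 3) ^ m i))"
    using assms
    by (intro mult_left_mono norm_prod_diff) (auto simp: norm_power norm_divide intro!: power_le_one)
  also have "\<dots> \<le> 3 ^ (\<Sum>i\<in>A. m i) * (\<Sum>i\<in>A. real (m i) * norm (a i - b i))"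
  proof (intro mult_left_mono sum_mono)
    fix i assume i: "i \<in> A"
    have "norm ((a i / 3) ^ m i - (b i / 3) ^ m i) \<le> real (m i) * norm (a i / 3 - b i / 3)"
      using assms i by (intro norm_power_diff) (auto simp: norm_divide)
    also have "norm (a i / 3 - b i / 3) = norm (a i - b i) / 3"
      by (simp add: diff_divide_distrib[symmetric] norm_divide)
    also have "real (m i) * (norm (a i - b i) / 3) \<le> real (m i) * norm (a i - b i)"
      by (intro mult_left_mono) auto
    finally show "norm ((a i / 3) ^ m i - (b i / 3) ^ m i) \<le> real (m i) * norm (a i - b i)" .
  qed auto
  finally show ?thesis .
qed



lemma Ln_lip:
  assumes "norm (u - 1) < 1/2" "norm (v - 1) < 1/2"
  shows "norm (Ln u - Ln v) \<le> 2 * norm (u - v)"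
proof -
  have inS: "z \<in> ball 1 (1/2) \<Longrightarrow> 1/2 < norm z \<and> 0 < Re z" for z :: complex
  proof -
    assume "z \<in> ball 1 (1/2)"
    then have h: "norm (z - 1) < 1/2" by (simp add: dist_norm norm_minus_commute)
    have "1 \<le> norm z + norm (1 - z)" using norm_triangle_ineq[of z "1 - z"] by simp
    then have "1/2 < norm z" using h by (simp add: norm_minus_commute)
    moreover have "\<bar>Re (z - 1)\<bar> < 1/2" using h abs_Re_le_cmod[of "z - 1"] by linarith
    then have "0 < Re z" unfolding minus_complex.sel one_complex.sel by linarith
    ultimately show ?thesis by simp
  qed
  show ?thesis
  proof (rule field_differentiable_bound[where S="ball 1 (1/2)" and f'=inverse])
    fix z :: complex assume z: "z \<in> ball 1 (1/2)"
    have "0 < Re z" using inS[OF z] by blast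
    then have "z \<notin> \<real>\<^sub>\<le>\<^sub>0" by (simp add: complex_nonpos_Reals_iff)
    then show "(Ln has_field_derivative inverse z) (at z within ball 1 (1/2))"
      by (rule has_field_derivative_at_within[OF has_field_derivative_Ln])
    have nz: "1/2 < norm z" using inS[OF z] by blast
    have "inverse (norm z) \<le> inverse (1/2)" by (rule le_imp_inverse_le) (use nz in auto)
    then show "norm (inverse z) \<le> 2" by (simp add: norm_inverse)
  qed (use assms in \<open>auto simp: dist_norm norm_minus_commute\<close>)
qed

lemma exp_lip:
  fixes x y :: complex
  assumes "norm x \<le> 1" "norm y \<le> 1"
  shows "norm (exp x - exp y) \<le> 3 * norm (x - y)"
proof (rule field_differentiable_bound[where S="cball 0 1" and f'=exp])
  fix z :: complex assume z: "z \<in> cball 0 1"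
  show "(exp has_field_derivative exp z) (at z within cball 0 1)"
    by (rule has_field_derivative_at_within[OF DERIV_exp])
  have "Re z \<le> 1" using z abs_Re_le_cmod[of z] by auto
  then have "exp (Re z) \<le> exp 1" by (simp only: exp_le_cancel_iff)
  then have "exp (Re z) \<le> 3" using exp_le by linarith
  then show "norm (exp z) \<le> 3" by (simp add: norm_exp_eq_Re)
qed (use assms in auto)

lemma Ln_bound:
  fixes z :: complex
  assumes "z \<noteq> 0"
  shows "norm (Ln z) \<le> \<bar>ln (norm z)\<bar> + pi"
proof -
  have "norm (Ln z) \<le> \<bar>Re (Ln z)\<bar> + \<bar>Im (Ln z)\<bar>" by (rule cmod_le)
  moreover have "\<bar>Im (Ln z)\<bar> \<le> pi" using mpi_less_Im_Ln[OF assms] Im_Ln_le_pi[OF assms] by auto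
  ultimately show ?thesis using Re_Ln[OF assms] by simp
qed

lemma cis_inj:
  assumes "0 \<le> a" "a \<le> 1" "0 \<le> b" "b \<le> 1" "cis a = cis b"
  shows "a = b"
proof -
  have "Re (cis a) = Re (cis b)" using assms(5) by (rule arg_cong)
  then have "cos a = cos b" by simp
  moreover have "a \<le> pi" "b \<le> pi" using assms pi_gt3 by linarith+
  ultimately show ?thesis using cos_inj_pi[of a b] assms(1,3) by blast
qed



lemma contraction_fix:
  fixes T :: "(nat \<Rightarrow> complex) \<Rightarrow> (nat \<Rightarrow> complex)" and q :: "nat \<Rightarrow> complex"
  assumes finI: "finite I"
    and maps: "\<And>c. (\<forall>j\<in>I. norm (c j - q j) \<le> \<rho>) \<Longrightarrow> (\<forall>j\<in>I. norm (T c j - q j) \<le> \<rho>)"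
    and contr: "\<And>c c'. (\<forall>j\<in>I. norm (c j - q j) \<le> \<rho>) \<Longrightarrow> (\<forall>j\<in>I. norm (c' j - q j) \<le> \<rho>) \<Longrightarrow>
        (\<Sum>j\<in>I. norm (T c j - T c' j)) \<le> 1/2 * (\<Sum>j\<in>I. norm (c j - c' j))"
    and rho: "0 \<le> \<rho>"
  shows "\<exists>c. (\<forall>j\<in>I. norm (c j - q j) \<le> \<rho>) \<and> (\<forall>j\<in>I. T c j = c j)"
proof -
  define D where "D = (\<lambda>c::nat \<Rightarrow> complex. \<forall>j\<in>I. norm (c j - q j) \<le> \<rho>)"
  define x where "x k = (T ^^ k) q" for k
  have xD: "D (x k)" for k
    by (induction k) (auto simp: x_def D_def rho intro!: maps[unfolded D_def[symmetric]])
  have xS: "x (Suc k) = T (x k)" for k by (simp add: x_def)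
  define d where "d k = (\<Sum>j\<in>I. norm (x (Suc k) j - x k j))" for k
  have dk: "d k \<le> d 0 * (1/2) ^ k" for k
  proof (induction k)
    case 0 then show ?case by simp
  next
    case (Suc k)
    have "d (Suc k) \<le> 1/2 * d k"
      unfolding d_def xS[of "Suc k"] xS[of k] using xD[of "Suc k"] xD[of k]
      unfolding xS D_def by (intro contr) auto
    also have "\<dots> \<le> 1/2 * (d 0 * (1/2) ^ k)" using Suc.IH by simp
    finally show ?case by simp
  qed
  have step: "norm (x (Suc k) j - x k j) \<le> d 0 * (1/2) ^ k" if "j \<in> I" for j k
  proof -
    have "norm (x (Suc k) j - x k j) \<le> d k"
      unfolding d_def using that finI by (intro member_le_sum) auto
    with dk[of k] show ?thesis by linarith
  qed
  have conv: "\<exists>L. (\<lambda>k. x k j) \<longlonglongrightarrow> L" if j: "j \<in> I" for j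
  proof -
    have sm: "summable (\<lambda>k. x (Suc k) j - x k j)"
      by (rule summable_comparison_test[where g="\<lambda>k. d 0 * (1/2) ^ k"])
         (use step[OF j] in \<open>auto intro!: summable_mult summable_geometric\<close>)
    have "(\<lambda>k. \<Sum>i<k. x (Suc i) j - x i j) \<longlonglongrightarrow> (\<Sum>i. x (Suc i) j - x i j)"
      by (rule summable_LIMSEQ[OF sm])
    moreover have "(\<lambda>k. \<Sum>i<k. x (Suc i) j - x i j) = (\<lambda>k. x k j - x 0 j)"
      using sum_lessThan_telescope[of "\<lambda>i. x i j"] by simp
    ultimately have "(\<lambda>k. x k j - x 0 j) \<longlonglongrightarrow> (\<Sum>i. x (Suc i) j - x i j)"
      by simp
    then have "(\<lambda>k. (x k j - x 0 j) + x 0 j) \<longlonglongrightarrow> (\<Sum>i. x (Suc i) j - x i j) + x 0 j"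
      by (intro tendsto_add tendsto_const)
    then show ?thesis by auto
  qed
  define L where "L j = lim (\<lambda>k. x k j)" for j
  have Llim: "(\<lambda>k. x k j) \<longlonglongrightarrow> L j" if "j \<in> I" for j
    using conv[OF that] unfolding L_def by (metis limI)
  have LD: "D L"
    unfolding D_def
  proof
    fix j assume j: "j \<in> I"
    have "(\<lambda>k. norm (x k j - q j)) \<longlonglongrightarrow> norm (L j - q j)"
      by (intro tendsto_norm tendsto_diff Llim[OF j] tendsto_const)
    moreover have "\<forall>k. norm (x k j - q j) \<le> \<rho>" using xD j by (auto simp: D_def)
    ultimately show "norm (L j - q j) \<le> \<rho>"
      by (intro LIMSEQ_le_const2[where X="\<lambda>k. norm (x k j - q j)"]) auto
  qed
  have fixpt: "T L j = L j" if j: "j \<in> I" for j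
  proof -
    have s0: "(\<lambda>k. \<Sum>i\<in>I. norm (L i - x k i)) \<longlonglongrightarrow> (\<Sum>i\<in>I. 0)"
    proof (intro tendsto_sum)
      fix i assume "i \<in> I"
      then have "(\<lambda>k. L i - x k i) \<longlonglongrightarrow> 0"
        using tendsto_diff[OF tendsto_const Llim[of i], of "L i"] by simp
      then show "(\<lambda>k. norm (L i - x k i)) \<longlonglongrightarrow> 0" by (rule tendsto_norm_zero)
    qed
    have bnd: "norm (T L j - x (Suc k) j) \<le> 1/2 * (\<Sum>i\<in>I. norm (L i - x k i))" for k
    proof -
      have "norm (T L j - x (Suc k) j) \<le> (\<Sum>i\<in>I. norm (T L i - T (x k) i))"
        unfolding xS using j finI by (intro member_le_sum[where f="\<lambda>i. norm (T L i - T (x k) i)"]) auto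
      also have "\<dots> \<le> 1/2 * (\<Sum>i\<in>I. norm (L i - x k i))"
        using LD xD[of k] unfolding D_def by (intro contr) auto
      finally show ?thesis .
    qed
    have "(\<lambda>k. norm (T L j - x (Suc k) j)) \<longlonglongrightarrow> 0"
    proof (rule tendsto_sandwich[where f="\<lambda>k. 0" and h="\<lambda>k. 1/2 * (\<Sum>i\<in>I. norm (L i - x k i))"])
      show "\<forall>\<^sub>F k in sequentially. 0 \<le> norm (T L j - x (Suc k) j)" by simp
      show "\<forall>\<^sub>F k in sequentially. norm (T L j - x (Suc k) j) \<le> 1/2 * (\<Sum>i\<in>I. norm (L i - x k i))"
        using bnd by simp
      show "(\<lambda>k. 1/2 * (\<Sum>i\<in>I. norm (L i - x k i))) \<longlonglongrightarrow> 0"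
        using tendsto_mult[OF tendsto_const s0, of "1/2"] by simp
    qed simp
    then have h: "(\<lambda>k. T L j - x (Suc k) j) \<longlonglongrightarrow> 0"
      by (simp add: tendsto_norm_zero_iff)
    have "(\<lambda>k. - (T L j - x (Suc k) j)) \<longlonglongrightarrow> - 0" by (rule tendsto_minus[OF h])
    then have "(\<lambda>k. x (Suc k) j - T L j) \<longlonglongrightarrow> 0" by simp
    then have "(\<lambda>k. x (Suc k) j) \<longlonglongrightarrow> T L j" by (rule LIM_zero_cancel)
    moreover have "(\<lambda>k. x (Suc k) j) \<longlonglongrightarrow> L j" using Llim[OF j] by (rule LIMSEQ_Suc)
    ultimately show ?thesis by (rule LIMSEQ_unique)
  qed
  show ?thesis using LD fixpt unfolding D_def by blast
qed




definition hh :: "nat set \<Rightarrow> (nat \<Rightarrow> nat) \<Rightarrow> (nat \<Rightarrow> complex) \<Rightarrow> nat \<Rightarrow> real \<Rightarrow> complex" where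
  "hh I m c j s = (\<Prod>i\<in>I-{j}. (c j * of_real s - c i) ^ m i)"

definition GG :: "nat \<Rightarrow> nat set \<Rightarrow> (nat \<Rightarrow> nat) \<Rightarrow> (nat \<Rightarrow> complex) \<Rightarrow> nat \<Rightarrow> complex" where
  "GG K I m c j = integral {0..1} (\<lambda>s. of_real (wt K (m j) s) * hh I m c j s)"

lemma hh_cont: "continuous_on S (hh I m c j)"
  unfolding hh_def by (intro continuous_intros)

lemma GG_integrable: "(\<lambda>s. of_real (wt K r s) * hh I m c j s) integrable_on {0..1}"
  by (intro integrable_continuous_interval continuous_intros hh_cont wt_cont)

lemma hh_diff_gen:
  assumes finI: "finite I" and j: "j \<in> I"
    and b1: "\<And>i. i \<in> I \<Longrightarrow> norm (c i) \<le> 3/2" and b2: "\<And>i. i \<in> I \<Longrightarrow> norm (c' i) \<le> 3/2"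
    and s: "0 \<le> s" "s \<le> 1" and s': "0 \<le> s'" "s' \<le> 1"
    and e0: "0 \<le> e" and e: "\<And>i. i \<in> I - {j} \<Longrightarrow> norm ((c j * of_real s - c i) - (c' j * of_real s' - c' i)) \<le> e"
  shows "norm (hh I m c j s - hh I m c' j s') \<le> 3 ^ (\<Sum>i\<in>I. m i) * real (\<Sum>i\<in>I. m i) * e"
proof -
  have nb: "norm (x j * of_real t - x i) \<le> 3" if "i \<in> I" "\<And>i. i \<in> I \<Longrightarrow> norm (x i) \<le> 3/2" "0 \<le> t" "t \<le> 1"
    for x :: "nat \<Rightarrow> complex" and i t
  proof -
    have "norm (x j * of_real t - x i) \<le> norm (x j) * \<bar>t\<bar> + norm (x i)"
      by (metis norm_triangle_ineq4 norm_mult norm_of_real)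
    also have "\<dots> \<le> 3/2 * 1 + 3/2"
      using that j by (intro add_mono mult_mono) auto
    finally show ?thesis by simp
  qed
  have "norm (hh I m c j s - hh I m c' j s') \<le>
        3 ^ (\<Sum>i\<in>I-{j}. m i) * (\<Sum>i\<in>I-{j}. real (m i) * norm ((c j * of_real s - c i) - (c' j * of_real s' - c' i)))"
    unfolding hh_def using finI b1 b2 s s' by (intro prod_pow_diff) (auto intro!: nb)
  also have "\<dots> \<le> 3 ^ (\<Sum>i\<in>I. m i) * (\<Sum>i\<in>I-{j}. real (m i) * e)"
  proof (intro mult_mono sum_mono mult_left_mono)
    show "(3::real) ^ (\<Sum>i\<in>I-{j}. m i) \<le> 3 ^ (\<Sum>i\<in>I. m i)"
      using finI by (intro power_increasing sum_mono2) auto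
  qed (use e e0 in \<open>auto intro!: sum_nonneg mult_nonneg_nonneg\<close>)
  also have "3 ^ (\<Sum>i\<in>I. m i) * (\<Sum>i\<in>I-{j}. real (m i) * e) = 3 ^ (\<Sum>i\<in>I. m i) * (real (\<Sum>i\<in>I-{j}. m i) * e)"
    by (simp add: sum_distrib_right)
  also have "\<dots> \<le> 3 ^ (\<Sum>i\<in>I. m i) * (real (\<Sum>i\<in>I. m i) * e)"
  proof (cases "I - {j} = {}")
    case True then show ?thesis using e0 by (simp add: True sum_nonneg)
  next
    case False
    have "(\<Sum>i\<in>I-{j}. m i) \<le> (\<Sum>i\<in>I. m i)" using finI by (intro sum_mono2) auto
    then have "real (\<Sum>i\<in>I-{j}. m i) \<le> real (\<Sum>i\<in>I. m i)" by (simp only: of_nat_le_iff)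
    then have "real (\<Sum>i\<in>I-{j}. m i) * e \<le> real (\<Sum>i\<in>I. m i) * e"
      using e0 by (rule mult_right_mono)
    then show ?thesis by (rule mult_left_mono) simp
  qed
  finally have "norm (hh I m c j s - hh I m c' j s') \<le> 3 ^ (\<Sum>i\<in>I. m i) * (real (\<Sum>i\<in>I. m i) * e)" .
  then show ?thesis by (simp only: mult.assoc)
qed


lemma GG_approx:
  assumes finI: "finite I" and j: "j \<in> I" and b: "\<And>i. i \<in> I \<Longrightarrow> norm (c i) \<le> 3/2"
  shows "norm (GG K I m c j - of_real (BB K (m j)) * hh I m c j 1)
           \<le> (2 * 3 ^ (\<Sum>i\<in>I. m i) * real (\<Sum>i\<in>I. m i)) * BB K (Suc (m j))"
proof -
  define C1 where "C1 = 2 * 3 ^ (\<Sum>i\<in>I. m i) * real (\<Sum>i\<in>I. m i)"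
  have int1: "(\<lambda>s. of_real (wt K (m j) s) * hh I m c j s) integrable_on {0..1}" by (rule GG_integrable)
  have int2: "(\<lambda>s. of_real (wt K (m j) s) * hh I m c j 1) integrable_on {0..1}"
    by (intro integrable_continuous_interval continuous_intros wt_cont)
  have "of_real (BB K (m j)) * hh I m c j 1 = integral {0..1} (\<lambda>s. of_real (wt K (m j) s)) * hh I m c j 1"
    by (simp add: integral_ofreal_wt)
  also have "\<dots> = integral {0..1} (\<lambda>s. of_real (wt K (m j) s) * hh I m c j 1)"
    by (rule integral_mult_left[symmetric])
  finally have e1: "of_real (BB K (m j)) * hh I m c j 1 = integral {0..1} (\<lambda>s. of_real (wt K (m j) s) * hh I m c j 1)" .
  have eq: "GG K I m c j - of_real (BB K (m j)) * hh I m c j 1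
        = integral {0..1} (\<lambda>s. of_real (wt K (m j) s) * hh I m c j s - of_real (wt K (m j) s) * hh I m c j 1)"
    unfolding GG_def e1 by (rule integral_diff[OF int1 int2, symmetric])
  have pt: "norm (of_real (wt K (m j) s) * hh I m c j s - of_real (wt K (m j) s) * hh I m c j 1) \<le> C1 * wt K (Suc (m j)) s"
    if s: "s \<in> {0..1}" for s
  proof -
    have w0: "0 \<le> wt K (m j) s" using s by (simp add: wt_def)
    have "norm (hh I m c j s - hh I m c j 1) \<le> 3 ^ (\<Sum>i\<in>I. m i) * real (\<Sum>i\<in>I. m i) * (3/2 * (1 - s))"
    proof (rule hh_diff_gen[OF finI j b b])
      fix i assume "i \<in> I - {j}"
      have "(c j * of_real s - c i) - (c j * of_real 1 - c i) = c j * of_real (s - 1)" by (simp add: algebra_simps)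
      moreover have "norm (of_real (s - 1) :: complex) = 1 - s" using s by (simp only: norm_of_real) simp
      ultimately have "norm ((c j * of_real s - c i) - (c j * of_real 1 - c i)) = norm (c j) * (1 - s)"
        by (simp only: norm_mult)
      also have "\<dots> \<le> 3/2 * (1 - s)" using b[OF j] s by (intro mult_right_mono) auto
      finally show "norm ((c j * of_real s - c i) - (c j * of_real 1 - c i)) \<le> 3/2 * (1 - s)" .
    qed (use s in auto)
    also have "\<dots> \<le> C1 * (1 - s)"
    proof -
      have Y: "0 \<le> 3 ^ (\<Sum>i\<in>I. m i) * real (\<Sum>i\<in>I. m i) * (1 - s)" (is "0 \<le> ?Y") using s by (intro mult_nonneg_nonneg) (auto intro: sum_nonneg)
      have "3 ^ (\<Sum>i\<in>I. m i) * real (\<Sum>i\<in>I. m i) * (3/2 * (1 - s)) = 3/2 * ?Y" by (simp only: mult_ac)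
      moreover have "C1 * (1 - s) = 2 * ?Y" unfolding C1_def by (simp only: mult_ac)
      ultimately show ?thesis using Y by linarith
    qed
    finally have h: "norm (hh I m c j s - hh I m c j 1) \<le> C1 * (1 - s)" .
    have "norm (of_real (wt K (m j) s) * hh I m c j s - of_real (wt K (m j) s) * hh I m c j 1)
          = wt K (m j) s * norm (hh I m c j s - hh I m c j 1)"
      using w0 by (simp add: right_diff_distrib[symmetric] norm_mult)
    also have "\<dots> \<le> wt K (m j) s * (C1 * (1 - s))" using h w0 by (rule mult_left_mono)
    also have "\<dots> = C1 * wt K (Suc (m j)) s" by (simp add: wt_def)
    finally show ?thesis .
  qed
  have "norm (GG K I m c j - of_real (BB K (m j)) * hh I m c j 1) \<le> integral {0..1} (\<lambda>s. C1 * wt K (Suc (m j)) s)"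
    unfolding eq
    by (rule integral_norm_bound_integral)
       (auto intro!: integrable_diff int1 int2 pt integrable_continuous_interval continuous_intros wt_cont hh_cont)
  also have "\<dots> = C1 * BB K (Suc (m j))" by (simp add: BB_def)
  finally show ?thesis unfolding C1_def .
qed

lemma GG_lip:
  assumes finI: "finite I" and j: "j \<in> I"
    and b: "\<And>i. i \<in> I \<Longrightarrow> norm (c i) \<le> 3/2" and b': "\<And>i. i \<in> I \<Longrightarrow> norm (c' i) \<le> 3/2"
    and e: "\<And>i. i \<in> I \<Longrightarrow> norm (c i - c' i) \<le> e" and e0: "0 \<le> e"
  shows "norm (GG K I m c j - GG K I m c' j) \<le> BB K (m j) * ((2 * 3 ^ (\<Sum>i\<in>I. m i) * real (\<Sum>i\<in>I. m i)) * e)"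
proof -
  define C1 where "C1 = 2 * 3 ^ (\<Sum>i\<in>I. m i) * real (\<Sum>i\<in>I. m i)"
  have pt: "norm (of_real (wt K (m j) s) * hh I m c j s - of_real (wt K (m j) s) * hh I m c' j s) \<le> wt K (m j) s * (C1 * e)"
    if s: "s \<in> {0..1}" for s
  proof -
    have w0: "0 \<le> wt K (m j) s" using s by (simp add: wt_def)
    have "norm (hh I m c j s - hh I m c' j s) \<le> 3 ^ (\<Sum>i\<in>I. m i) * real (\<Sum>i\<in>I. m i) * (2 * e)"
    proof (rule hh_diff_gen[OF finI j b b'])
      fix i assume i: "i \<in> I - {j}"
      have "(c j * of_real s - c i) - (c' j * of_real s - c' i) = (c j - c' j) * of_real s - (c i - c' i)"
        by (simp add: algebra_simps)
      then have "norm ((c j * of_real s - c i) - (c' j * of_real s - c' i)) \<le> norm (c j - c' j) * \<bar>s\<bar> + norm (c i - c' i)"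
        by (metis norm_mult norm_of_real norm_triangle_ineq4)
      also have "\<dots> \<le> e * 1 + e" using e[OF j] e[of i] i s e0 by (intro add_mono mult_mono) auto
      finally show "norm ((c j * of_real s - c i) - (c' j * of_real s - c' i)) \<le> 2 * e" by simp
    qed (use s e0 in auto)
    then have h: "norm (hh I m c j s - hh I m c' j s) \<le> C1 * e" unfolding C1_def by (simp add: algebra_simps)
    have "norm (of_real (wt K (m j) s) * hh I m c j s - of_real (wt K (m j) s) * hh I m c' j s)
          = wt K (m j) s * norm (hh I m c j s - hh I m c' j s)"
      using w0 by (simp add: right_diff_distrib[symmetric] norm_mult)
    also have "\<dots> \<le> wt K (m j) s * (C1 * e)" using h w0 by (rule mult_left_mono)
    finally show ?thesis .
  qed
  have "norm (GG K I m c j - GG K I m c' j) \<le> integral {0..1} (\<lambda>s. wt K (m j) s * (C1 * e))"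
    unfolding GG_def integral_diff[OF GG_integrable GG_integrable, symmetric]
    by (rule integral_norm_bound_integral)
       (auto intro!: integrable_diff GG_integrable pt integrable_continuous_interval continuous_intros wt_cont hh_cont)
  also have "\<dots> = BB K (m j) * (C1 * e)" by (simp add: BB_def)
  finally show ?thesis unfolding C1_def .
qed

lemma lim_aux: "((\<lambda>K::nat. (c * ln (real K + b) + A) / (real K + b)) \<longlongrightarrow> 0) sequentially"
proof -
  have f: "filterlim (\<lambda>K::nat. real K + b) at_top sequentially"
    using filterlim_tendsto_add_at_top[OF tendsto_const filterlim_real_sequentially, of b]
    by (simp add: add.commute)
  have l1: "((\<lambda>K::nat. ln (real K + b) / (real K + b)) \<longlongrightarrow> 0) sequentially"
    using filterlim_compose[OF ln_x_over_x_tendsto_0 f] by simp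
  have l2: "((\<lambda>K::nat. inverse (real K + b)) \<longlongrightarrow> 0) sequentially"
    by (rule tendsto_inverse_0_at_top[OF f])
  have "((\<lambda>K::nat. c * (ln (real K + b) / (real K + b)) + A * inverse (real K + b)) \<longlongrightarrow> c * 0 + A * 0) sequentially"
    by (intro tendsto_add tendsto_mult tendsto_const l1 l2)
  moreover have "(\<lambda>K::nat. c * (ln (real K + b) / (real K + b)) + A * inverse (real K + b))
      = (\<lambda>K::nat. (c * ln (real K + b) + A) / (real K + b))"
    by (rule ext) (simp add: add_divide_distrib divide_inverse distrib_right)
  ultimately show ?thesis by simp
qed



lemma analytic_core:
  fixes n :: nat and m :: "nat \<Rightarrow> nat"
  assumes n1: "1 \<le> n" and mpos: "\<forall>i\<in>{1..n}. 0 < m i"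
  shows "\<exists>K c. inj_on c {1..n} \<and> (\<forall>j\<in>{1..n}. c j \<noteq> 0) \<and>
           (\<forall>j\<in>{1..n}. c j ^ (K + m j + 1) * (-1) ^ m j * GG K {1..n} m c j = c j)"
proof -
  define I where "I = {1..n}"
  have finI: "finite I" unfolding I_def by simp
  have nI: "n \<in> I" unfolding I_def using n1 by simp
  have cardI: "card I = n" unfolding I_def by simp
  have mposI: "0 < m i" if "i \<in> I" for i using mpos that unfolding I_def by blast
  define M where "M = (\<Sum>i\<in>I. m i)"
  have M1: "1 \<le> M"
  proof -
    have "m n \<le> M" unfolding M_def using finI nI by (intro member_le_sum) auto
    moreover have "0 < m n" using mposI nI by blast
    ultimately show ?thesis by linarith
  qed
  define C1 where "C1 = 2 * 3 ^ M * real M"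
  have C1pos: "0 < C1" using M1 by (simp add: C1_def)
  define q :: "nat \<Rightarrow> complex" where "q j = cis (real j / real n)" for j
  have qn: "norm (q j) = 1" for j by (simp add: q_def)
  have qinj: "inj_on q I"
  proof (rule inj_onI)
    fix i j assume i: "i \<in> I" and j: "j \<in> I" and e: "q i = q j"
    have i1: "real i / real n \<le> 1" and j1: "real j / real n \<le> 1"
      using i j n1 unfolding I_def by (simp_all add: divide_le_eq_1)
    have "real i / real n = real j / real n"
      by (rule cis_inj) (use i1 j1 e in \<open>simp_all add: q_def\<close>)
    then show "i = j" using n1 by (simp add: field_simps)
  qed
  define \<gamma> where "\<gamma> j = hh I m q j 1" for j
  have \<gamma>nz: "\<gamma> j \<noteq> 0" if "j \<in> I" for j
  proof -
    have "q j - q i \<noteq> 0" if "i \<in> I - {j}" for i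
      using qinj that \<open>j \<in> I\<close> by (auto simp: inj_on_def)
    then show ?thesis unfolding \<gamma>_def hh_def using finI by (simp add: prod_zero_iff)
  qed
  define g where "g = Min ((\<lambda>j. norm (\<gamma> j)) ` I)"
  have gle: "g \<le> norm (\<gamma> j)" if "j \<in> I" for j unfolding g_def using finI that by (intro Min_le) auto
  have gpos: "0 < g" unfolding g_def using finI nI \<gamma>nz by (subst Min_gr_iff) auto
  define \<rho> where "\<rho> = min (1/2) (g / (8 * C1))"
  have \<rho>pos: "0 < \<rho>" using gpos C1pos by (simp add: \<rho>_def)
  have \<rho>le: "\<rho> \<le> 1/2" by (simp add: \<rho>_def)
  have C1\<rho>: "C1 * \<rho> \<le> g / 8"
  proof -
    have "\<rho> \<le> g / (8 * C1)" by (simp add: \<rho>_def)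
    then have "C1 * \<rho> \<le> C1 * (g / (8 * C1))" using C1pos by (intro mult_left_mono) auto
    also have "\<dots> = g / 8" using C1pos by simp
    finally show ?thesis .
  qed

  define condA where "condA K j \<longleftrightarrow> (C1 * (real (m j) + 1) / g) / (real K + (real (m j) + 2)) < 1/8" for K j
  define condB where "condB K j \<longleftrightarrow> 12 / (real K + (real (m j) + 1)) < \<rho> / 2" for K j
  define condC where "condC K j \<longleftrightarrow> (2 * (real (m j) + 1) * ln (real K + (real (m j) + 1)) + 2 * (\<bar>ln (norm (\<gamma> j))\<bar> + pi)) / (real K + (real (m j) + 1)) < min 1 (\<rho> / 6)" for K j
  define condD where "condD K j \<longleftrightarrow> (48 * C1 * real n / g) / (real K + (real (m j) + 1)) < 1" for K j
  have "\<forall>\<^sub>F K in sequentially. \<forall>j\<in>I. condA K j \<and> condB K j \<and> condC K j \<and> condD K j"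
  proof (rule eventually_ball_finite[OF finI], rule ballI)
    fix j assume j: "j \<in> I"
    have lA: "((\<lambda>K::nat. (0 * ln (real K + (real (m j) + 2)) + C1 * (real (m j) + 1) / g) / (real K + (real (m j) + 2))) \<longlongrightarrow> 0) sequentially"
      by (rule lim_aux)
    have lB: "((\<lambda>K::nat. (0 * ln (real K + (real (m j) + 1)) + 12) / (real K + (real (m j) + 1))) \<longlongrightarrow> 0) sequentially"
      by (rule lim_aux)
    have lC: "((\<lambda>K::nat. (2 * (real (m j) + 1) * ln (real K + (real (m j) + 1)) + 2 * (\<bar>ln (norm (\<gamma> j))\<bar> + pi)) / (real K + (real (m j) + 1))) \<longlongrightarrow> 0) sequentially"
      by (rule lim_aux)
    have lD: "((\<lambda>K::nat. (0 * ln (real K + (real (m j) + 1)) + 48 * C1 * real n / g) / (real K + (real (m j) + 1))) \<longlongrightarrow> 0) sequentially"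
      by (rule lim_aux)
    have eA: "\<forall>\<^sub>F K in sequentially. condA K j"
      using order_tendstoD(2)[OF lA, of "1/8"] unfolding condA_def by simp
    have eB: "\<forall>\<^sub>F K in sequentially. condB K j"
      using order_tendstoD(2)[OF lB, of "\<rho>/2"] \<rho>pos unfolding condB_def by simp
    have eC: "\<forall>\<^sub>F K in sequentially. condC K j"
      using order_tendstoD(2)[OF lC, of "min 1 (\<rho>/6)"] \<rho>pos unfolding condC_def by simp
    have eD: "\<forall>\<^sub>F K in sequentially. condD K j"
      using order_tendstoD(2)[OF lD, of 1] unfolding condD_def by simp
    show "\<forall>\<^sub>F K in sequentially. condA K j \<and> condB K j \<and> condC K j \<and> condD K j"
      using eA eB eC eD by (intro eventually_conj)
  qed
  then obtain K where condK: "\<And>j. j \<in> I \<Longrightarrow> condA K j \<and> condB K j \<and> condC K j \<and> condD K j"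
    unfolding eventually_sequentially by blast

  define B where "B j = BB K (m j)" for j
  define Nn where "Nn j = K + m j" for j
  define u where "u c j = GG K I m c j / (of_real (B j) * \<gamma> j)" for c j
  define W where "W j = (-1) ^ m j / (of_real (B j) * \<gamma> j)" for j
  define \<omega> where "\<omega> j = q j * exp (Ln (W j / q j ^ Nn j) / of_nat (Nn j))" for j
  define T where "T c j = (if j \<in> I then \<omega> j * exp (- Ln (u c j) / of_nat (Nn j)) else 0)" for c j
  define D where "D c \<longleftrightarrow> (\<forall>i\<in>I. norm (c i - q i) \<le> \<rho>)" for c
  have Bpos: "0 < B j" for j by (simp add: B_def BB_pos)
  have B1: "B j \<le> 1" for j by (simp add: B_def BB_le1)
  have BSuc: "BB K (Suc (m j)) = B j * (real (m j) + 1) / (real K + real (m j) + 2)" for j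
    by (simp add: B_def BB_Suc)
  have Npos: "1 \<le> Nn j" if "j \<in> I" for j using mposI[OF that] by (simp add: Nn_def)
  have Nx: "real K + (real (m j) + 1) \<le> 2 * real (Nn j)" if "j \<in> I" for j
    using Npos[OF that] by (simp add: Nn_def)
  have Dbnd: "norm (c i) \<le> 3/2" if "D c" "i \<in> I" for c i
  proof -
    have "norm (c i) \<le> norm (c i - q i) + norm (q i)" using norm_triangle_ineq[of "c i - q i" "q i"] by simp
    also have "\<dots> \<le> \<rho> + 1" using that qn[of i] unfolding D_def by auto
    finally show ?thesis using \<rho>le by linarith
  qed
  have qbnd: "norm (q i) \<le> 3/2" for i using qn[of i] by simp
  have hh_near: "norm (hh I m c j 1 - \<gamma> j) \<le> g / 8" if "D c" "j \<in> I" for c j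
  proof -
    have "norm (hh I m c j 1 - hh I m q j 1) \<le> 3 ^ M * real M * (2 * \<rho>)"
      unfolding M_def
    proof (rule hh_diff_gen[OF finI \<open>j \<in> I\<close>])
      fix i assume i: "i \<in> I - {j}"
      have "(c j * of_real 1 - c i) - (q j * of_real 1 - q i) = (c j - q j) - (c i - q i)" by simp
      then have "norm ((c j * of_real 1 - c i) - (q j * of_real 1 - q i)) \<le> norm (c j - q j) + norm (c i - q i)"
        by (metis norm_triangle_ineq4)
      also have "\<dots> \<le> \<rho> + \<rho>" using that i unfolding D_def by (intro add_mono) auto
      finally show "norm ((c j * of_real 1 - c i) - (q j * of_real 1 - q i)) \<le> 2 * \<rho>" by simp
    qed (use that Dbnd qbnd \<rho>pos in auto)
    also have "\<dots> = C1 * \<rho>" by (simp add: C1_def)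
    also have "\<dots> \<le> g / 8" by (rule C1\<rho>)
    finally show ?thesis by (simp add: \<gamma>_def)
  qed

  have Bg: "0 < B j * norm (\<gamma> j)" if "j \<in> I" for j
    using Bpos[of j] \<gamma>nz[OF that] by simp
  have u_near: "norm (u c j - 1) \<le> 1/4" if Dc: "D c" and j: "j \<in> I" for c j
  proof -
    have a: "C1 * (real (m j) + 1) / (real K + (real (m j) + 2)) \<le> g / 8"
    proof -
      have "(C1 * (real (m j) + 1) / g) / (real K + (real (m j) + 2)) < 1/8"
        using condK[OF j] unfolding condA_def by blast
      then have "g * ((C1 * (real (m j) + 1) / g) / (real K + (real (m j) + 2))) \<le> g * (1/8)"
        using gpos by (intro mult_left_mono) auto
      moreover have "C1 * (real (m j) + 1) / (real K + (real (m j) + 2)) = g * ((C1 * (real (m j) + 1) / g) / (real K + (real (m j) + 2)))"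
        using gpos by simp
      ultimately show ?thesis by simp
    qed
    have "norm (GG K I m c j - of_real (B j) * hh I m c j 1) \<le> C1 * BB K (Suc (m j))"
      using GG_approx[OF finI j, of c K m] Dbnd[OF Dc] unfolding C1_def M_def B_def by blast
    also have "\<dots> = B j * (C1 * (real (m j) + 1) / (real K + (real (m j) + 2)))"
      by (simp add: BSuc add.assoc)
    also have "\<dots> \<le> B j * (g / 8)" using a Bpos[of j] by (intro mult_left_mono) auto
    finally have h1: "norm (GG K I m c j - of_real (B j) * hh I m c j 1) \<le> B j * (g / 8)" .
    have h2: "norm (of_real (B j) * hh I m c j 1 - of_real (B j) * \<gamma> j) \<le> B j * (g / 8)"
    proof -
      have "norm (of_real (B j) * hh I m c j 1 - of_real (B j) * \<gamma> j) = B j * norm (hh I m c j 1 - \<gamma> j)"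
        using Bpos[of j] by (simp add: right_diff_distrib[symmetric] norm_mult)
      also have "\<dots> \<le> B j * (g / 8)" using hh_near[OF Dc j] Bpos[of j] by (intro mult_left_mono) auto
      finally show ?thesis .
    qed
    have "norm (GG K I m c j - of_real (B j) * \<gamma> j) \<le> norm (GG K I m c j - of_real (B j) * hh I m c j 1) + norm (of_real (B j) * hh I m c j 1 - of_real (B j) * \<gamma> j)"
      using norm_triangle_ineq[of "GG K I m c j - of_real (B j) * hh I m c j 1" "of_real (B j) * hh I m c j 1 - of_real (B j) * \<gamma> j"]
      by simp
    also have "\<dots> \<le> B j * (g / 4)" using h1 h2 by simp
    finally have h3: "norm (GG K I m c j - of_real (B j) * \<gamma> j) \<le> B j * (g / 4)" .
    have nz: "of_real (B j) * \<gamma> j \<noteq> 0" using Bpos[of j] \<gamma>nz[OF j] by simp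
    have "u c j - 1 = (GG K I m c j - of_real (B j) * \<gamma> j) / (of_real (B j) * \<gamma> j)"
      unfolding u_def using nz by (simp add: field_simps)
    then have "norm (u c j - 1) = norm (GG K I m c j - of_real (B j) * \<gamma> j) / (B j * norm (\<gamma> j))"
      using Bpos[of j] by (simp add: norm_divide norm_mult)
    also have "\<dots> \<le> (B j * (g / 4)) / (B j * g)"
      using h3 Bg[OF j] gle[OF j] Bpos[of j] gpos
      by (intro frac_le mult_left_mono) auto
    also have "\<dots> = 1/4" using Bpos[of j] gpos by simp
    finally show ?thesis .
  qed
  have u_nz: "u c j \<noteq> 0" if "D c" "j \<in> I" for c j
    using u_near[OF that] by auto
  define S where "S c c' = (\<Sum>i\<in>I. norm (c i - c' i))" for c c' :: "nat \<Rightarrow> complex"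
  have S_ge: "norm (c i - c' i) \<le> S c c'" if "i \<in> I" for c c' i
    unfolding S_def using finI that by (intro member_le_sum) auto
  have S_nn: "0 \<le> S c c'" for c c' unfolding S_def by (intro sum_nonneg) auto
  have u_lip: "norm (u c j - u c' j) \<le> C1 * S c c' / g" if Dc: "D c" and Dc': "D c'" and j: "j \<in> I" for c c' j
  proof -
    have h: "norm (GG K I m c j - GG K I m c' j) \<le> B j * (C1 * S c c')"
      using GG_lip[OF finI j, of c c' "S c c'" K m] Dbnd[OF Dc] Dbnd[OF Dc'] S_ge S_nn
      unfolding C1_def M_def B_def by blast
    have nz: "of_real (B j) * \<gamma> j \<noteq> 0" using Bpos[of j] \<gamma>nz[OF j] by simp
    have "u c j - u c' j = (GG K I m c j - GG K I m c' j) / (of_real (B j) * \<gamma> j)"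
      unfolding u_def using nz by (simp add: field_simps)
    then have "norm (u c j - u c' j) = norm (GG K I m c j - GG K I m c' j) / (B j * norm (\<gamma> j))"
      using Bpos[of j] by (simp add: norm_divide norm_mult)
    also have "\<dots> \<le> (B j * (C1 * S c c')) / (B j * g)"
      using h Bg[OF j] gle[OF j] Bpos[of j] gpos C1pos S_nn[of c c']
      by (intro frac_le mult_left_mono mult_nonneg_nonneg) auto
    also have "\<dots> = C1 * S c c' / g" using Bpos[of j] by simp
    finally show ?thesis .
  qed
  have Ln_small: "norm (Ln (u c j)) \<le> 1/2" if "D c" "j \<in> I" for c j
  proof -
    have "norm (Ln (u c j) - Ln 1) \<le> 2 * norm (u c j - 1)"
      by (rule Ln_lip) (use u_near[OF that] in auto)
    then show ?thesis using u_near[OF that] by simp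
  qed

  have \<omega>_facts: "norm (\<omega> j - q j) \<le> \<rho> / 2 \<and> norm (\<omega> j) \<le> 2" if j: "j \<in> I" for j
  proof -
    define x where "x = real K + (real (m j) + 1)"
    have xpos: "0 < x" by (simp add: x_def)
    define zz where "zz = W j / q j ^ Nn j"
    have qN: "norm (q j ^ Nn j) = 1" by (simp add: norm_power qn)
    have G: "0 < norm (\<gamma> j)" using \<gamma>nz[OF j] by simp
    have zzn: "norm zz = 1 / (B j * norm (\<gamma> j))"
      unfolding zz_def W_def using Bpos[of j] qN by (simp add: norm_divide norm_mult norm_power)
    have zz_nz: "zz \<noteq> 0" using zzn Bpos[of j] G by auto
    have L0: "0 \<le> ln (1 / B j)" using Bpos[of j] B1[of j] by simp
    have Lx: "ln (1 / B j) \<le> (real (m j) + 1) * ln x"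
    proof -
      have "1 / B j \<le> x ^ (m j + 1)" using BB_inv_le[of K "m j"] unfolding B_def x_def by (simp add: add.assoc)
      then have "ln (1 / B j) \<le> ln (x ^ (m j + 1))" using Bpos[of j] xpos by (subst ln_le_cancel_iff) auto
      also have "\<dots> = real (m j + 1) * ln x" by (rule ln_realpow)
      also have "\<dots> = (real (m j) + 1) * ln x" by simp
      finally show ?thesis .
    qed
    have lnzz: "ln (norm zz) = ln (1 / B j) - ln (norm (\<gamma> j))"
      unfolding zzn using Bpos[of j] G by (simp add: ln_div ln_mult)
    have lnb: "\<bar>ln (norm zz)\<bar> \<le> (real (m j) + 1) * ln x + \<bar>ln (norm (\<gamma> j))\<bar>"
      unfolding lnzz using L0 Lx by linarith
    define Q where "Q = (real (m j) + 1) * ln x + \<bar>ln (norm (\<gamma> j))\<bar> + pi"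
    have Q0: "0 \<le> Q" using L0 Lx pi_gt_zero unfolding Q_def by linarith
    have LnQ: "norm (Ln zz) \<le> Q" using Ln_bound[OF zz_nz] lnb unfolding Q_def by linarith
    have Npos': "0 < real (Nn j)" using Npos[OF j] by simp
    have "norm (Ln zz / of_nat (Nn j)) = norm (Ln zz) / real (Nn j)" by (simp add: norm_divide)
    also have "\<dots> \<le> Q / real (Nn j)" using LnQ Npos' by (simp add: divide_right_mono)
    also have "\<dots> = 2 * Q / (2 * real (Nn j))" using Npos' by simp
    also have "\<dots> \<le> 2 * Q / x" using Nx[OF j] xpos Q0 unfolding x_def by (intro divide_left_mono) auto
    also have "\<dots> < min 1 (\<rho> / 6)"
    proof -
      have "2 * Q / x = (2 * (real (m j) + 1) * ln x + 2 * (\<bar>ln (norm (\<gamma> j))\<bar> + pi)) / x"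
        unfolding Q_def by (simp add: algebra_simps)
      then show ?thesis using condK[OF j] unfolding condC_def x_def by simp
    qed
    finally have yb: "norm (Ln zz / of_nat (Nn j)) < min 1 (\<rho> / 6)" .
    have "norm (exp (Ln zz / of_nat (Nn j)) - exp 0) \<le> 3 * norm (Ln zz / of_nat (Nn j) - 0)"
      by (rule exp_lip) (use yb in auto)
    also have "\<dots> \<le> 3 * (\<rho> / 6)" using yb by simp
    finally have e1: "norm (exp (Ln zz / of_nat (Nn j)) - 1) \<le> \<rho> / 2" by simp
    have "\<omega> j - q j = q j * (exp (Ln zz / of_nat (Nn j)) - 1)"
      unfolding \<omega>_def zz_def by (simp add: algebra_simps)
    then have d: "norm (\<omega> j - q j) \<le> \<rho> / 2" using e1 by (simp add: norm_mult qn)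
    have "norm (\<omega> j) \<le> norm (\<omega> j - q j) + norm (q j)"
      using norm_triangle_ineq[of "\<omega> j - q j" "q j"] by simp
    then have "norm (\<omega> j) \<le> 2" using d qn[of j] \<rho>le by linarith
    with d show ?thesis by blast
  qed

  have xx_small: "norm (- Ln (u c j) / of_nat (Nn j)) \<le> 1/2 / real (Nn j)" if "D c" "j \<in> I" for c j
  proof -
    have "norm (- Ln (u c j) / of_nat (Nn j)) = norm (Ln (u c j)) / real (Nn j)" by (simp add: norm_divide)
    also have "\<dots> \<le> 1/2 / real (Nn j)" by (rule divide_right_mono) (use Ln_small[OF that] in auto)
    finally show ?thesis .
  qed
  have T_maps: "D (T c)" if Dc: "D c" for c
    unfolding D_def
  proof
    fix j assume j: "j \<in> I"
    define xx where "xx = - Ln (u c j) / of_nat (Nn j)"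
    have Npos': "1 \<le> real (Nn j)" using Npos[OF j] by simp
    have xb: "norm xx \<le> 1/2 / real (Nn j)" unfolding xx_def by (rule xx_small[OF Dc j])
    also have "\<dots> \<le> 1/2" using Npos' by (simp add: divide_le_eq)
    finally have xb1: "norm xx \<le> 1/2" .
    have "norm (exp xx - exp 0) \<le> 3 * norm (xx - 0)" by (rule exp_lip) (use xb1 in auto)
    then have e1: "norm (exp xx - 1) \<le> 3 * (1/2 / real (Nn j))" using xb by simp
    have b3: "3 * (1/2 / real (Nn j)) * 2 \<le> \<rho> / 2"
    proof -
      have "12 / (real K + (real (m j) + 1)) < \<rho> / 2" using condK[OF j] unfolding condB_def by blast
      moreover have "3 * (1/2 / real (Nn j)) * 2 \<le> 12 / (2 * real (Nn j))" using Npos[OF j] by (simp add: field_simps)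
      moreover have "12 / (2 * real (Nn j)) \<le> 12 / (real K + (real (m j) + 1))"
        using Nx[OF j] by (intro divide_left_mono) auto
      ultimately show ?thesis by linarith
    qed
    have "T c j - q j = \<omega> j * (exp xx - 1) + (\<omega> j - q j)"
      unfolding T_def xx_def using j by (simp add: algebra_simps)
    then have "norm (T c j - q j) \<le> norm (\<omega> j) * norm (exp xx - 1) + norm (\<omega> j - q j)"
      by (metis norm_mult norm_triangle_ineq)
    also have "\<dots> \<le> 2 * (3 * (1/2 / real (Nn j))) + \<rho> / 2"
      using \<omega>_facts[OF j] e1 by (intro add_mono mult_mono) auto
    also have "\<dots> \<le> \<rho>" using b3 by simp
    finally show "norm (T c j - q j) \<le> \<rho>" .
  qed
  have T_contr: "(\<Sum>j\<in>I. norm (T c j - T c' j)) \<le> 1/2 * S c c'" if Dc: "D c" and Dc': "D c'" for c c'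
  proof -
    have each: "norm (T c j - T c' j) \<le> S c c' / (2 * real n)" if j: "j \<in> I" for j
    proof -
      define xx where "xx = - Ln (u c j) / of_nat (Nn j)"
      define xx' where "xx' = - Ln (u c' j) / of_nat (Nn j)"
      have Npos': "1 \<le> real (Nn j)" using Npos[OF j] by simp
      have hN: "1/2 / real (Nn j) \<le> 1" using Npos' by (simp add: divide_le_eq)
      have xb: "norm xx \<le> 1" using xx_small[OF Dc j] hN unfolding xx_def by linarith
      have xb': "norm xx' \<le> 1" using xx_small[OF Dc' j] hN unfolding xx'_def by linarith
      have "T c j - T c' j = \<omega> j * (exp xx - exp xx')"
        unfolding T_def xx_def xx'_def using j by (simp add: algebra_simps)
      then have "norm (T c j - T c' j) = norm (\<omega> j) * norm (exp xx - exp xx')" by (simp add: norm_mult)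
      also have "\<dots> \<le> 2 * (3 * norm (xx - xx'))"
        using \<omega>_facts[OF j] exp_lip[OF xb xb'] by (intro mult_mono) auto
      also have "xx - xx' = (Ln (u c' j) - Ln (u c j)) / of_nat (Nn j)"
        unfolding xx_def xx'_def by (simp add: diff_divide_distrib)
      also have "norm \<dots> = norm (Ln (u c j) - Ln (u c' j)) / real (Nn j)"
        by (simp add: norm_divide norm_minus_commute)
      also have "norm (Ln (u c j) - Ln (u c' j)) \<le> 2 * norm (u c j - u c' j)"
        by (rule Ln_lip) (use u_near[OF Dc j] u_near[OF Dc' j] in auto)
      also have "norm (u c j - u c' j) \<le> C1 * S c c' / g" by (rule u_lip[OF Dc Dc' j])
      finally have h: "norm (T c j - T c' j) \<le> 2 * (3 * (2 * (C1 * S c c' / g) / real (Nn j)))"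
        using Npos' by (simp add: divide_right_mono)
      have k: "12 * C1 / (g * real (Nn j)) \<le> 1 / (2 * real n)"
      proof -
        have "(48 * C1 * real n / g) / (real K + (real (m j) + 1)) < 1" using condK[OF j] unfolding condD_def by blast
        moreover have gx: "0 < g * (real K + (real (m j) + 1))" using gpos by simp
        moreover have "(48 * C1 * real n / g) / (real K + (real (m j) + 1)) = 48 * C1 * real n / (g * (real K + (real (m j) + 1)))"
          by simp
        ultimately have "48 * C1 * real n < 1 * (g * (real K + (real (m j) + 1)))"
          using pos_divide_less_eq[OF gx] by simp
        then have "48 * C1 * real n < (real K + (real (m j) + 1)) * g" by (simp add: mult.commute)
        also have "\<dots> \<le> 2 * real (Nn j) * g" using Nx[OF j] gpos by (intro mult_right_mono) auto
        finally have "24 * C1 * real n \<le> g * real (Nn j)" by simp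
        then show ?thesis using gpos Npos' n1 by (simp add: field_simps)
      qed
      have "2 * (3 * (2 * (C1 * S c c' / g) / real (Nn j))) = S c c' * (12 * C1 / (g * real (Nn j)))"
        by (simp add: field_simps)
      also have "\<dots> \<le> S c c' * (1 / (2 * real n))" using k S_nn by (intro mult_left_mono) auto
      finally show ?thesis using h by simp
    qed
    have "(\<Sum>j\<in>I. norm (T c j - T c' j)) \<le> (\<Sum>j\<in>I. S c c' / (2 * real n))"
      by (intro sum_mono each)
    also have "\<dots> = real n * (S c c' / (2 * real n))" using cardI by simp
    also have "\<dots> = 1/2 * S c c'" using n1 by simp
    finally show ?thesis .
  qed
  obtain c where Dc: "D c" and fixc: "\<And>j. j \<in> I \<Longrightarrow> T c j = c j"
    using contraction_fix[OF finI, of q \<rho> T] T_maps T_contr \<rho>pos unfolding D_def S_def by auto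

  have cnz: "c j \<noteq> 0" if j: "j \<in> I" for j
  proof
    assume "c j = 0"
    then have "norm (q j) \<le> \<rho>" using Dc j unfolding D_def by auto
    then show False using qn[of j] \<rho>le by simp
  qed
  have cinj: "inj_on c I"
  proof (rule inj_onI, rule ccontr)
    fix i j assume i: "i \<in> I" and j: "j \<in> I" and e: "c i = c j" and ne: "i \<noteq> j"
    have "hh I m c j 1 = 0"
    proof -
      have "i \<in> I - {j}" using i ne by blast
      moreover have "(c j * of_real 1 - c i) ^ m i = 0" using e mposI[OF i] by simp
      ultimately show ?thesis unfolding hh_def using finI by (intro prod_zero) auto
    qed
    then have "norm (\<gamma> j) \<le> g / 8" using hh_near[OF Dc j] by (simp add: norm_minus_commute)
    then show False using gle[OF j] gpos by simp
  qed
  have ceq: "c j ^ (K + m j + 1) * (-1) ^ m j * GG K I m c j = c j" if j: "j \<in> I" for j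
  proof -
    have Nnz: "Nn j \<noteq> 0" using Npos[OF j] by simp
    have un: "u c j \<noteq> 0" by (rule u_nz[OF Dc j])
    have Bgnz: "of_real (B j) * \<gamma> j \<noteq> 0" using Bpos[of j] \<gamma>nz[OF j] by simp
    have GGnz: "GG K I m c j \<noteq> 0" using un unfolding u_def by auto
    have qNnz: "q j ^ Nn j \<noteq> 0" using qn[of j] by auto
    have pw: "exp (z / of_nat (Nn j)) ^ Nn j = exp z" for z :: complex
    proof -
      have "exp (z / of_nat (Nn j)) ^ Nn j = exp (of_nat (Nn j) * (z / of_nat (Nn j)))"
        by (rule exp_of_nat_mult[symmetric])
      also have "of_nat (Nn j) * (z / of_nat (Nn j)) = z" using Nnz by simp
      finally show ?thesis .
    qed
    have Wnz: "W j \<noteq> 0" using Bgnz unfolding W_def by simp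
    have \<omega>N: "\<omega> j ^ Nn j = W j"
      unfolding \<omega>_def power_mult_distrib pw using Wnz qNnz by (simp add: exp_Ln)
    have cj: "c j = \<omega> j * exp (- Ln (u c j) / of_nat (Nn j))"
      using fixc[OF j] j unfolding T_def by simp
    have "c j ^ Nn j = W j * exp (- Ln (u c j))"
      unfolding cj power_mult_distrib pw \<omega>N ..
    also have "exp (- Ln (u c j)) = inverse (u c j)" using un by (simp add: exp_minus exp_Ln)
    finally have cN: "c j ^ Nn j = W j / u c j" by (simp add: divide_inverse)
    have "c j ^ (K + m j + 1) * (-1) ^ m j * GG K I m c j = c j * (c j ^ Nn j * (-1) ^ m j * GG K I m c j)"
      unfolding Nn_def by (simp add: algebra_simps)
    also have "c j ^ Nn j * (-1) ^ m j * GG K I m c j = ((-1) ^ m j * (-1) ^ m j)"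
      unfolding cN W_def u_def using Bgnz GGnz by (simp add: field_simps)
    also have "(-1 :: complex) ^ m j * (-1) ^ m j = 1" by (simp add: power_add[symmetric])
    finally show ?thesis by simp
  qed
  show ?thesis
    using cinj cnz ceq unfolding I_def by blast
qed



lemma poly_Qp_at:
  assumes "finite I" "j \<in> I"
  shows "poly (Qp K I m c) (c j * of_real s) = c j ^ (K + m j) * (-1) ^ m j * (of_real (wt K (m j) s) * hh I m c j s)"
proof -
  have e2: "(\<Prod>i\<in>I. (c j * of_real s - c i) ^ m i) = (c j * of_real s - c j) ^ m j * hh I m c j s"
    unfolding hh_def using assms by (simp add: prod.remove)
  have "c j * of_real s - c j = c j * (-1) * of_real (1 - s)" by (simp add: algebra_simps)
  then have e1: "(c j * of_real s - c j) ^ m j = c j ^ m j * (-1) ^ m j * of_real (1 - s) ^ m j"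
    by (simp only: power_mult_distrib)
  have e3: "poly (Qp K I m c) (c j * of_real s) = (c j * of_real s) ^ K * (\<Prod>i\<in>I. (c j * of_real s - c i) ^ m i)"
    by (rule poly_Qp)
  have e4: "(of_real (wt K (m j) s) :: complex) = of_real s ^ K * of_real (1 - s) ^ m j"
    by (simp add: wt_def)
  show ?thesis
    unfolding e3 e2 e1 e4 by (simp only: power_add power_mult_distrib mult_ac)
qed

lemma main_n0: "\<exists>(P::complex poly) (c::nat \<Rightarrow> complex).
           critically_fixed_poly P \<and> inj_on c {1..0} \<and>
           (\<forall>i\<in>{1..0}. is_crit_point P (c i) \<and> crit_mult P (c i) = m i)"
proof -
  define P :: "complex poly" where "P = [:0, 0, 1:]"
  have "critically_fixed_poly P"
    unfolding critically_fixed_poly_def is_crit_point_def P_def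
    by (simp add: pderiv_pCons)
  then show ?thesis by auto
qed

theorem lemma2p2:
  fixes n :: nat and m :: "nat \<Rightarrow> nat"
  assumes "\<forall>i\<in>{1..n}. m i > 0"
  shows "\<exists>(P::complex poly) (c::nat \<Rightarrow> complex).
           critically_fixed_poly P \<and> inj_on c {1..n} \<and>
           (\<forall>i\<in>{1..n}. is_crit_point P (c i) \<and> crit_mult P (c i) = m i)"
proof (cases "n = 0")
  case True
  then show ?thesis using main_n0 by simp
next
  case False
  then have n1: "1 \<le> n" by simp
  define I where "I = {1..n}"
  have finI: "finite I" by (simp add: I_def)
  have nI: "n \<in> I" using n1 by (simp add: I_def)
  obtain K c where cinj: "inj_on c I" and cnz: "\<And>j. j \<in> I \<Longrightarrow> c j \<noteq> 0"
    and ceq: "\<And>j. j \<in> I \<Longrightarrow> c j ^ (K + m j + 1) * (-1) ^ m j * GG K I m c j = c j"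
    using analytic_core[OF n1 assms] unfolding I_def by blast
  define Q where "Q = Qp K I m c"
  obtain P where PQ: "pderiv P = Q" and P0: "poly P 0 = 0" using antideriv_exists by blast
  have Qnz: "Q \<noteq> 0" unfolding Q_def using finI by (rule Qp_nonzero)
  have Pfix: "poly P (c j) = c j" if j: "j \<in> I" for j
  proof -
    have "poly P (c j) = c j * integral {0..1} (\<lambda>s::real. poly Q (c j * of_real s))"
      using poly_integral_rep[of P "c j"] P0 PQ by simp
    also have "(\<lambda>s::real. poly Q (c j * of_real s)) = (\<lambda>s. c j ^ (K + m j) * (-1) ^ m j * (of_real (wt K (m j) s) * hh I m c j s))"
      unfolding Q_def using poly_Qp_at[OF finI j] by blast
    also have "integral {0..1} \<dots> = c j ^ (K + m j) * (-1) ^ m j * GG K I m c j"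
      unfolding GG_def by (rule integral_mult_right)
    also have "c j * (c j ^ (K + m j) * (-1) ^ m j * GG K I m c j) = c j ^ (K + m j + 1) * (-1) ^ m j * GG K I m c j"
      by (simp add: algebra_simps)
    also have "\<dots> = c j" by (rule ceq[OF j])
    finally show ?thesis .
  qed
  have Qroot: "poly Q (c j) = 0" if j: "j \<in> I" for j
  proof -
    have "0 < m j" using assms j by (simp add: I_def)
    then show ?thesis unfolding Q_def poly_Qp using finI j by (auto intro!: prod_zero bexI[of _ j])
  qed
  have degQ: "1 \<le> degree Q"
  proof (rule ccontr)
    assume "\<not> 1 \<le> degree Q"
    then have "degree Q = 0" by simp
    then obtain a where "Q = [:a:]" by (metis degree_eq_zeroE)
    then show False using Qnz Qroot[OF nI] by simp
  qed
  have degP: "2 \<le> degree P"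
  proof -
    have "degree Q = degree P - 1" using PQ degree_pderiv[of P] by simp
    then show ?thesis using degQ by linarith
  qed
  have cf: "critically_fixed_poly P"
    unfolding critically_fixed_poly_def is_crit_point_def
  proof (intro conjI allI impI)
    show "2 \<le> degree P" by (rule degP)
    fix z assume "poly (pderiv P) z = 0"
    then have "poly Q z = 0" by (simp add: PQ)
    then have "z = 0 \<or> (\<exists>i\<in>I. z = c i)" unfolding Q_def using finI by (rule Qp_roots[rotated])
    then show "poly P z = z" using P0 Pfix by auto
  qed
  have "\<forall>i\<in>I. is_crit_point P (c i) \<and> crit_mult P (c i) = m i"
    unfolding is_crit_point_def crit_mult_def PQ
    using Qroot Qp_order[OF finI _ cinj cnz] unfolding Q_def by blast
  then show ?thesis using cf cinj unfolding I_def by blast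
qed


end
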